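(* Let $n\ge 1$, $\rho\in(0,1)$ and $a\in(0,1)$ with $2^n a\in\mathbb Z$. Then $\mathbf{MaxStab}_\Phi(a)\le \Gamma_\rho(a)$, where $$\Gamma_\rho(a):=\sup_{P_{Z|S}}\ \mathbb E[\Phi(a+\rho Z)]\quad\text{s.t.}\quad 0\le a+\rho Z\le 1\ \text{a.s.},\quad \mathbb E[Z]=0,\quad \mathbb E[Z^2]\le \mathbb E[SZ],$$ the supremum being over all conditional probability mass functions $P_{Z|S}$ (with $Z$ real-valued), where $(S,Z)\sim P_SP_{Z|S}$ and $S$ has distribution $P_S(-a)=1-a$, $P_S(1-a)=a$.
   Context: Let $n\ge1$, $\rho\in[0,1]$. Let $\mathbf X$ be uniformly distributed on $\{-1,1\}^n$ and let $\mathbf Y$ be obtained from $\mathbf X$ by independently flipping the sign of each coordinate with probability $(1-\rho)/2$. For a Boolean function $f:\{-1,1\}^n\to\{0,1\}$ define $T_\rho f(\mathbf x)=\mathbb E[f(\mathbf Y)\mid \mathbf X=\mathbf x]$. Let $\Phi:[0,1]\to\mathbb R$ be continuous and strictly convex. The $\Phi$-stability is $\mathbf{Stab}_\Phi[f]=\mathbb E[\Phi(T_\rho f(\mathbf X))]$, and for $a\in 2^{-n}\{0,1,\dots,2^n\}$, $\mathbf{MaxStab}_\Phi(a)=\max\{\mathbf{Stab}_\Phi[f]: f:\{-1,1\}^n\to\{0,1\},\ \mathbb E f(\mathbf X)=a\}$. *)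

theory Defs
  imports "HOL-Analysis.Analysis" "HOL-Probability.Probability"
begin

definition strictly_convex_on :: "real set \<Rightarrow> (real \<Rightarrow> real) \<Rightarrow> bool" where
  "strictly_convex_on S f \<longleftrightarrow>
     (\<forall>x\<in>S. \<forall>y\<in>S. x \<noteq> y \<longrightarrow>
        (\<forall>t::real. 0 < t \<and> t < 1 \<longrightarrow> f ((1 - t) * x + t * y) < (1 - t) * f x + t * f y))"

text \<open>The hypercube: a point of the n-cube is a bool list of length n
  (True stands for +1, False for -1).\<close>
definition cube :: "nat \<Rightarrow> bool list set" where
  "cube n = {xs. length xs = n}"

definition noise_kernel :: "real \<Rightarrow> bool list \<Rightarrow> bool list \<Rightarrow> real" where
  "noise_kernel \<rho> x y = (\<Prod>i<length x. if x ! i = y ! i then (1 + \<rho>) / 2 else (1 - \<rho>) / 2)"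

definition T_noise :: "nat \<Rightarrow> real \<Rightarrow> (bool list \<Rightarrow> real) \<Rightarrow> bool list \<Rightarrow> real" where
  "T_noise n \<rho> f x = (\<Sum>y\<in>cube n. noise_kernel \<rho> x y * f y)"

definition cube_mean :: "nat \<Rightarrow> (bool list \<Rightarrow> real) \<Rightarrow> real" where
  "cube_mean n g = (\<Sum>x\<in>cube n. g x) / 2 ^ n"

definition Stab :: "(real \<Rightarrow> real) \<Rightarrow> nat \<Rightarrow> real \<Rightarrow> (bool list \<Rightarrow> real) \<Rightarrow> real" where
  "Stab \<Phi> n \<rho> f = cube_mean n (\<lambda>x. \<Phi> (T_noise n \<rho> f x))"

definition bool_funs :: "nat \<Rightarrow> (bool list \<Rightarrow> real) set" where
  "bool_funs n = cube n \<rightarrow>\<^sub>E {0, 1}"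

definition MaxStab :: "(real \<Rightarrow> real) \<Rightarrow> nat \<Rightarrow> real \<Rightarrow> real \<Rightarrow> real" where
  "MaxStab \<Phi> n \<rho> a = Max {Stab \<Phi> n \<rho> f | f. f \<in> bool_funs n \<and> cube_mean n f = a}"

definition S_pmf :: "real \<Rightarrow> real pmf" where
  "S_pmf a = map_pmf (\<lambda>b. if b then 1 - a else - a) (bernoulli_pmf a)"

text \<open>Joint law of (S,Z) ~ P_S P_{Z|S}, where K s is the conditional pmf of Z given S = s.\<close>
definition joint_SZ :: "real \<Rightarrow> (real \<Rightarrow> real pmf) \<Rightarrow> (real \<times> real) pmf" where
  "joint_SZ a K = bind_pmf (S_pmf a) (\<lambda>s. map_pmf (\<lambda>z. (s, z)) (K s))"

definition Gamma_feasible :: "real \<Rightarrow> real \<Rightarrow> (real \<Rightarrow> real pmf) \<Rightarrow> bool" where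
  "Gamma_feasible \<rho> a K \<longleftrightarrow>
     (\<forall>(s, z) \<in> set_pmf (joint_SZ a K). 0 \<le> a + \<rho> * z \<and> a + \<rho> * z \<le> 1) \<and>
     measure_pmf.expectation (joint_SZ a K) (\<lambda>(s, z). z) = 0 \<and>
     measure_pmf.expectation (joint_SZ a K) (\<lambda>(s, z). z ^ 2)
        \<le> measure_pmf.expectation (joint_SZ a K) (\<lambda>(s, z). s * z)"

definition Gamma_rho :: "(real \<Rightarrow> real) \<Rightarrow> real \<Rightarrow> real \<Rightarrow> real" where
  "Gamma_rho \<Phi> \<rho> a = Sup {measure_pmf.expectation (joint_SZ a K) (\<lambda>(s, z). \<Phi> (a + \<rho> * z)) | K. Gamma_feasible \<rho> a K}"

end

theory Submission
  imports Defs
begin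

definition sg :: "bool \<Rightarrow> real" where "sg b = (if b then 1 else -1)"
definition chi :: "nat set \<Rightarrow> bool list \<Rightarrow> real" where "chi S x = (\<Prod>i\<in>S. sg (x ! i))"

lemma cube_eq: "cube n = {xs. set xs \<subseteq> UNIV \<and> length xs = n}" by (simp add: cube_def)
lemma finite_cube: "finite (cube n)" unfolding cube_eq by (rule finite_lists_length_eq) simp
lemma card_cube: "card (cube n) = 2 ^ n" unfolding cube_eq by (subst card_lists_length_eq) simp_all

lemma chi_sq: "chi A x * chi A x = 1"
  unfolding chi_def prod.distrib[symmetric] by (rule prod.neutral) (simp add: sg_def)

lemma chi_mult: assumes "finite S" "finite T"
  shows "chi S x * chi T x = chi ((S - T) \<union> (T - S)) x"
proof -
  have e1: "chi S x = chi (S - T) x * chi (S \<inter> T) x"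
    unfolding chi_def using assms prod.subset_diff[of "S \<inter> T" S] by (simp add: Diff_Int)
  have e2: "chi T x = chi (T - S) x * chi (S \<inter> T) x"
    unfolding chi_def using assms prod.subset_diff[of "S \<inter> T" T] by (simp add: Diff_Int Int_commute)
  have e3: "chi ((S - T) \<union> (T - S)) x = chi (S - T) x * chi (T - S) x"
    unfolding chi_def using assms by (subst prod.union_disjoint) auto
  show ?thesis unfolding e1 e2 e3
    using chi_sq[of "S \<inter> T" x] by (simp add: algebra_simps)
qed

lemma sum_chi: assumes "U \<subseteq> {..<n}" shows "(\<Sum>x\<in>cube n. chi U x) = (if U = {} then 2^n else 0)"
proof (cases "U = {}")
  case True thus ?thesis by (simp add: chi_def card_cube)
next
  case False
  then obtain j where j: "j \<in> U" by blast
  with assms have jn: "j < n" by auto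
  have fin: "finite U" using assms finite_subset by blast
  define fl where "fl x = x[j := \<not> x ! j]" for x :: "bool list"
  have fl_in: "fl x \<in> cube n" if "x \<in> cube n" for x using that by (simp add: fl_def cube_def)
  have fl_fl: "fl (fl x) = x" if "x \<in> cube n" for x using that jn by (simp add: fl_def cube_def)
  have neg: "chi U (fl x) = - chi U x" if "x \<in> cube n" for x
  proof -
    have "chi U (fl x) = sg (fl x ! j) * (\<Prod>i\<in>U - {j}. sg (fl x ! i))" unfolding chi_def using fin j by (simp add: prod.remove)
    also have "(\<Prod>i\<in>U - {j}. sg (fl x ! i)) = (\<Prod>i\<in>U - {j}. sg (x ! i))" by (rule prod.cong) (auto simp: fl_def)
    also have "sg (fl x ! j) = - sg (x ! j)" using that jn by (simp add: fl_def cube_def sg_def)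
    finally show ?thesis unfolding chi_def using fin j by (simp add: prod.remove)
  qed
  have "(\<Sum>x\<in>cube n. chi U x) = (\<Sum>x\<in>cube n. chi U (fl x))"
    by (rule sum.reindex_bij_witness[where i=fl and j=fl]) (auto simp: fl_in fl_fl)
  also have "\<dots> = - (\<Sum>x\<in>cube n. chi U x)" by (simp add: neg sum_negf)
  finally show ?thesis using False by simp
qed

lemma orth: assumes "S \<subseteq> {..<n}" "T \<subseteq> {..<n}"
  shows "(\<Sum>x\<in>cube n. chi S x * chi T x) = (if S = T then 2^n else 0)"
proof -
  have fS: "finite S" "finite T" using assms finite_subset by blast+
  have "(\<Sum>x\<in>cube n. chi S x * chi T x) = (\<Sum>x\<in>cube n. chi ((S - T) \<union> (T - S)) x)"
    using chi_mult[OF fS] by simp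
  also have "\<dots> = (if (S - T) \<union> (T - S) = {} then 2^n else 0)"
    by (rule sum_chi) (use assms in auto)
  also have "((S - T) \<union> (T - S) = {}) = (S = T)" by blast
  finally show ?thesis .
qed

lemma kernel_fourier: assumes "x \<in> cube n"
  shows "noise_kernel \<rho> x y = (\<Sum>S\<in>Pow {..<n}. \<rho>^card S * chi S x * chi S y) / 2^n"
proof -
  have lx: "length x = n" using assms by (simp add: cube_def)
  have "noise_kernel \<rho> x y = (\<Prod>i<n. (\<rho> * (sg (x!i) * sg (y!i)) + 1) / 2)"
    unfolding noise_kernel_def lx by (rule prod.cong) (auto simp: sg_def)
  also have "\<dots> = (\<Prod>i<n. (\<rho> * (sg (x!i) * sg (y!i)) + 1)) / 2^n"
    by (simp add: prod_dividef)
  also have "(\<Prod>i<n. (\<rho> * (sg (x!i) * sg (y!i)) + 1)) = (\<Sum>S\<in>Pow {..<n}. (\<Prod>i\<in>S. \<rho> * (sg (x!i) * sg (y!i))) * (\<Prod>i\<in>{..<n} - S. 1))"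
    by (rule prod_add) simp
  also have "\<dots> = (\<Sum>S\<in>Pow {..<n}. \<rho>^card S * chi S x * chi S y)"
    by (rule sum.cong) (auto simp: chi_def prod.distrib mult.assoc)
  finally show ?thesis .
qed

definition coef :: "nat \<Rightarrow> (bool list \<Rightarrow> real) \<Rightarrow> nat set \<Rightarrow> real" where
  "coef n f S = (\<Sum>y\<in>cube n. chi S y * f y) / 2^n"

lemma T_fourier: assumes "x \<in> cube n"
  shows "T_noise n \<rho> f x = (\<Sum>S\<in>Pow {..<n}. \<rho>^card S * coef n f S * chi S x)"
proof -
  have "T_noise n \<rho> f x = (\<Sum>y\<in>cube n. \<Sum>S\<in>Pow {..<n}. \<rho>^card S * chi S x * (chi S y * f y) / 2^n)"
    unfolding T_noise_def kernel_fourier[OF assms]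
    by (simp add: sum_divide_distrib sum_distrib_right mult.assoc)
  also have "\<dots> = (\<Sum>S\<in>Pow {..<n}. \<Sum>y\<in>cube n. \<rho>^card S * chi S x * (chi S y * f y) / 2^n)"
    by (rule sum.swap)
  also have "\<dots> = (\<Sum>S\<in>Pow {..<n}. \<rho>^card S * coef n f S * chi S x)"
    unfolding coef_def by (rule sum.cong) (simp_all add: sum_divide_distrib sum_distrib_left mult_ac)
  finally show ?thesis .
qed

lemma sum_sq_fourier:
  "(\<Sum>x\<in>cube n. (\<Sum>S\<in>Pow {..<n}. c S * chi S x)^2) = 2^n * (\<Sum>S\<in>Pow {..<n}. (c S)^2)"
proof -
  have "(\<Sum>x\<in>cube n. (\<Sum>S\<in>Pow {..<n}. c S * chi S x)^2)
     = (\<Sum>x\<in>cube n. \<Sum>S\<in>Pow {..<n}. \<Sum>T\<in>Pow {..<n}. c S * c T * (chi S x * chi T x))"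
    by (simp add: power2_eq_square sum_product algebra_simps)
  also have "\<dots> = (\<Sum>S\<in>Pow {..<n}. \<Sum>T\<in>Pow {..<n}. c S * c T * (\<Sum>x\<in>cube n. chi S x * chi T x))"
    by (subst sum.swap) (simp add: sum.swap[of _ "cube n"] sum_distrib_left)
  also have "\<dots> = (\<Sum>S\<in>Pow {..<n}. \<Sum>T\<in>Pow {..<n}. c S * c T * (if S = T then 2^n else 0))"
    by (intro sum.cong refl) (simp add: orth)
  also have "\<dots> = (\<Sum>S\<in>Pow {..<n}. \<Sum>T\<in>Pow {..<n}. (if S = T then c S * c S * 2^n else 0))"
    by (intro sum.cong refl) auto
  also have "\<dots> = 2^n * (\<Sum>S\<in>Pow {..<n}. (c S)^2)"
    by (simp add: sum_distrib_left power2_eq_square mult.commute)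
  finally show ?thesis .
qed

lemma sum_fourier:
  "(\<Sum>x\<in>cube n. (\<Sum>S\<in>Pow {..<n}. c S * chi S x)) = 2^n * c {}"
proof -
  have "(\<Sum>x\<in>cube n. (\<Sum>S\<in>Pow {..<n}. c S * chi S x)) = (\<Sum>S\<in>Pow {..<n}. c S * (\<Sum>x\<in>cube n. chi S x))"
    by (subst sum.swap) (simp add: sum_distrib_left)
  also have "\<dots> = (\<Sum>S\<in>Pow {..<n}. c S * (if S = {} then 2^n else 0))"
    by (intro sum.cong refl) (simp add: sum_chi)
  also have "\<dots> = 2^n * c {}" by (simp add: if_distrib cong: if_cong)
  finally show ?thesis .
qed


lemma sum_T: "(\<Sum>x\<in>cube n. T_noise n \<rho> f x) = 2^n * coef n f {}"
proof -
  have "(\<Sum>x\<in>cube n. T_noise n \<rho> f x) = (\<Sum>x\<in>cube n. \<Sum>S\<in>Pow {..<n}. (\<rho>^card S * coef n f S) * chi S x)"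
    by (intro sum.cong refl) (simp add: T_fourier)
  also have "\<dots> = 2^n * coef n f {}" by (subst sum_fourier) simp
  finally show ?thesis .
qed

lemma sum_T2: "(\<Sum>x\<in>cube n. (T_noise n \<rho> f x)^2) = 2^n * (\<Sum>S\<in>Pow {..<n}. \<rho>^(2*card S) * (coef n f S)^2)"
proof -
  have "(\<Sum>x\<in>cube n. (T_noise n \<rho> f x)^2) = (\<Sum>x\<in>cube n. (\<Sum>S\<in>Pow {..<n}. (\<rho>^card S * coef n f S) * chi S x)^2)"
    by (intro sum.cong refl) (simp add: T_fourier)
  also have "\<dots> = 2^n * (\<Sum>S\<in>Pow {..<n}. (\<rho>^card S * coef n f S)^2)" by (rule sum_sq_fourier)
  also have "\<dots> = 2^n * (\<Sum>S\<in>Pow {..<n}. \<rho>^(2*card S) * (coef n f S)^2)"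
    by (simp add: power_mult_distrib power_mult[symmetric] mult.commute)
  finally show ?thesis .
qed

lemma sum_fT: "(\<Sum>x\<in>cube n. f x * T_noise n \<rho> f x) = 2^n * (\<Sum>S\<in>Pow {..<n}. \<rho>^(card S) * (coef n f S)^2)"
proof -
  have "(\<Sum>x\<in>cube n. f x * T_noise n \<rho> f x) = (\<Sum>x\<in>cube n. \<Sum>S\<in>Pow {..<n}. \<rho>^card S * coef n f S * (chi S x * f x))"
    by (intro sum.cong refl) (simp add: T_fourier sum_distrib_left mult_ac)
  also have "\<dots> = (\<Sum>S\<in>Pow {..<n}. \<rho>^card S * coef n f S * (\<Sum>x\<in>cube n. chi S x * f x))"
    by (subst sum.swap) (simp add: sum_distrib_left)
  also have "\<dots> = (\<Sum>S\<in>Pow {..<n}. \<rho>^card S * coef n f S * (2^n * coef n f S))"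
    by (simp add: coef_def)
  also have "\<dots> = 2^n * (\<Sum>S\<in>Pow {..<n}. \<rho>^(card S) * (coef n f S)^2)"
    by (simp add: sum_distrib_left power2_eq_square mult_ac)
  finally show ?thesis .
qed

lemma key_ineq: assumes "0 < \<rho>" "\<rho> < 1"
  shows "(\<Sum>x\<in>cube n. (T_noise n \<rho> f x)^2) - 2^n * (coef n f {})^2
     \<le> \<rho> * ((\<Sum>x\<in>cube n. f x * T_noise n \<rho> f x) - 2^n * (coef n f {})^2)"
proof -
  let ?c = "coef n f"
  let ?P = "Pow {..<n::nat} - {{}}"
  have fin: "finite (Pow {..<n::nat})" by simp
  have s1: "(\<Sum>S\<in>Pow {..<n}. \<rho>^(2*card S) * (?c S)^2) = (?c {})^2 + (\<Sum>S\<in>?P. \<rho>^(2*card S) * (?c S)^2)"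
    using fin by (subst sum.remove[of _ "{}"]) auto
  have s2: "(\<Sum>S\<in>Pow {..<n}. \<rho>^(card S) * (?c S)^2) = (?c {})^2 + (\<Sum>S\<in>?P. \<rho>^(card S) * (?c S)^2)"
    using fin by (subst sum.remove[of _ "{}"]) auto
  have m: "(\<Sum>S\<in>?P. \<rho>^(2*card S) * (?c S)^2) \<le> (\<Sum>S\<in>?P. \<rho> * (\<rho>^(card S) * (?c S)^2))"
  proof (rule sum_mono)
    fix S assume S: "S \<in> ?P"
    then have "finite S" "S \<noteq> {}" using finite_subset by auto
    then have k: "1 \<le> card S" by (simp add: Suc_le_eq card_gt_0_iff)
    have pw: "\<rho>^(2*card S) \<le> \<rho>^(Suc (card S))"
      by (rule power_decreasing) (use k assms in auto)
    then show "\<rho>^(2*card S) * (?c S)^2 \<le> \<rho> * (\<rho>^(card S) * (?c S)^2)"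
      using mult_right_mono[OF pw, of "(?c S)^2"] by (simp add: mult.assoc)
  qed
  have m2: "(2::real)^n * (\<Sum>S\<in>?P. \<rho>^(2*card S) * (?c S)^2) \<le> 2^n * (\<rho> * (\<Sum>S\<in>?P. \<rho>^(card S) * (?c S)^2))"
    using m by (intro mult_left_mono) (simp_all add: sum_distrib_left)
  show ?thesis unfolding sum_T2 sum_fT s1 s2
    using m2 by (simp add: algebra_simps)
qed


lemma kernel_nonneg: assumes "\<rho> < 1" "0 < \<rho>" shows "0 \<le> noise_kernel \<rho> x y"
  unfolding noise_kernel_def using assms by (intro prod_nonneg) auto

lemma T_one: assumes "x \<in> cube n" shows "T_noise n \<rho> (\<lambda>_. 1) x = 1"
proof -
  have "T_noise n \<rho> (\<lambda>_. 1) x = (\<Sum>S\<in>Pow {..<n}. (if S = {} then 1 else 0))"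
    unfolding T_fourier[OF assms]
  proof (intro sum.cong refl)
    fix S assume "S \<in> Pow {..<n}"
    then have "coef n (\<lambda>_. 1) S = (if S = {} then 1 else 0)" unfolding coef_def using sum_chi[of S n] by simp
    then show "\<rho> ^ card S * coef n (\<lambda>_. 1) S * chi S x = (if S = {} then 1 else 0)" by (simp add: chi_def)
  qed
  also have "\<dots> = 1" by (simp add: sum.delta)
  finally show ?thesis .
qed

lemma T_range: assumes "\<rho> < 1" "0 < \<rho>" "x \<in> cube n" "\<And>y. y \<in> cube n \<Longrightarrow> 0 \<le> f y \<and> f y \<le> 1"
  shows "0 \<le> T_noise n \<rho> f x" "T_noise n \<rho> f x \<le> 1"
proof -
  show "0 \<le> T_noise n \<rho> f x" unfolding T_noise_def
    using assms kernel_nonneg by (intro sum_nonneg mult_nonneg_nonneg) auto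
  have "T_noise n \<rho> f x \<le> T_noise n \<rho> (\<lambda>_. 1) x" unfolding T_noise_def
    using assms kernel_nonneg by (intro sum_mono mult_left_mono) auto
  then show "T_noise n \<rho> f x \<le> 1" using T_one[OF assms(3)] by simp
qed

lemma joint_expect:
  assumes "0 < a" "a < 1" "finite A1" "finite A0" "A1 \<noteq> {}" "A0 \<noteq> {}"
    "real (card A1) = N * a" "real (card A0) = N * (1 - a)" "N > 0"
  shows "measure_pmf.expectation (joint_SZ a (\<lambda>s. if s = 1 - a then map_pmf Z (pmf_of_set A1) else map_pmf Z (pmf_of_set A0))) h
    = ((\<Sum>x\<in>A1. h (1 - a, Z x)) + (\<Sum>x\<in>A0. h (- a, Z x))) / N"
proof -
  define K where "K = (\<lambda>s. if s = 1 - a then map_pmf Z (pmf_of_set A1) else map_pmf Z (pmf_of_set A0))"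
  define sel where "sel = (\<lambda>b. if b then 1 - a else - a)"
  have J: "joint_SZ a K = bind_pmf (bernoulli_pmf a) (\<lambda>b. map_pmf (\<lambda>z. (sel b, z)) (K (sel b)))"
    unfolding joint_SZ_def S_pmf_def sel_def bind_map_pmf by simp
  have fin: "finite (set_pmf (map_pmf (\<lambda>z. (sel b, z)) (K (sel b))))" for b
    using assms by (auto simp: K_def)
  have "measure_pmf.expectation (joint_SZ a K) h
      = (\<Sum>b\<in>UNIV. pmf (bernoulli_pmf a) b *\<^sub>R measure_pmf.expectation (map_pmf (\<lambda>z. (sel b, z)) (K (sel b))) h)"
    unfolding J by (rule pmf_expectation_bind) (use fin in auto)
  also have "\<dots> = a * ((\<Sum>x\<in>A1. h (1 - a, Z x)) / card A1) + (1 - a) * ((\<Sum>x\<in>A0. h (- a, Z x)) / card A0)"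
    using assms by (simp add: UNIV_bool K_def sel_def integral_pmf_of_set)
  also have "\<dots> = ((\<Sum>x\<in>A1. h (1 - a, Z x)) + (\<Sum>x\<in>A0. h (- a, Z x))) / N"
    using assms(9) unfolding assms(7,8) using assms(1,2) by (simp add: field_simps)
  finally show ?thesis unfolding K_def .
qed

lemma joint_set:
  assumes "finite A1" "finite A0" "A1 \<noteq> {}" "A0 \<noteq> {}"
  shows "set_pmf (joint_SZ a (\<lambda>s. if s = 1 - a then map_pmf Z (pmf_of_set A1) else map_pmf Z (pmf_of_set A0)))
     \<subseteq> UNIV \<times> Z ` (A1 \<union> A0)"
  using set_pmf_of_set[OF assms(3,1)] set_pmf_of_set[OF assms(4,2)] unfolding joint_SZ_def by (auto split: if_splits)


lemma stab_feasible:
  assumes "0 < \<rho>" "\<rho> < 1" "0 < a" "a < 1" "f \<in> bool_funs n" "cube_mean n f = a"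
  shows "\<exists>K. Gamma_feasible \<rho> a K \<and> measure_pmf.expectation (joint_SZ a K) (\<lambda>(s, z). \<Phi> (a + \<rho> * z)) = Stab \<Phi> n \<rho> f"
proof -
  define N where "N = (2::real)^n"
  have N0: "N > 0" by (simp add: N_def)
  have fv: "f x \<in> {0, 1}" if "x \<in> cube n" for x
    using assms(5) that unfolding bool_funs_def by (auto dest: PiE_mem)
  define Tf where "Tf = T_noise n \<rho> f"
  define Z where "Z x = (Tf x - a) / \<rho>" for x
  define A1 where "A1 = {x\<in>cube n. f x = 1}"
  define A0 where "A0 = {x\<in>cube n. f x = 0}"
  have fin1: "finite A1" and fin0: "finite A0" using finite_cube by (auto simp: A1_def A0_def)
  have un: "cube n = A1 \<union> A0" using fv by (auto simp: A1_def A0_def)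
  have dj: "A1 \<inter> A0 = {}" by (auto simp: A1_def A0_def)
  have sumf: "(\<Sum>x\<in>cube n. f x) = N * a" using assms(6) N0 by (simp add: cube_mean_def N_def field_simps)
  have "(\<Sum>x\<in>cube n. f x) = (\<Sum>x\<in>A1. f x) + (\<Sum>x\<in>A0. f x)"
    unfolding un by (rule sum.union_disjoint[OF fin1 fin0 dj])
  also have "\<dots> = card A1" by (simp add: A1_def A0_def)
  finally have c1: "real (card A1) = N * a" using sumf by simp
  have "card (cube n) = card A1 + card A0" unfolding un using card_Un_disjoint[OF fin1 fin0 dj] by simp
  then have "real (card A1) + real (card A0) = N" by (simp add: card_cube N_def flip: of_nat_add)
  then have c0: "real (card A0) = N * (1 - a)"
    using c1 by (simp add: algebra_simps)
  have ne1: "A1 \<noteq> {}" using c1 N0 assms by auto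
  have ne0: "A0 \<noteq> {}" using c0 N0 assms by auto
  have coef0: "coef n f {} = a" using sumf N0 by (simp add: coef_def chi_def N_def)
  have sumT: "(\<Sum>x\<in>cube n. Tf x) = N * a" unfolding Tf_def sum_T coef0 N_def ..
  define K where "K = (\<lambda>s. if s = 1 - a then map_pmf Z (pmf_of_set A1) else map_pmf Z (pmf_of_set A0))"
  have E: "measure_pmf.expectation (joint_SZ a K) h = (\<Sum>x\<in>cube n. h (f x - a, Z x)) / N" for h
  proof -
    have "measure_pmf.expectation (joint_SZ a K) h = ((\<Sum>x\<in>A1. h (1 - a, Z x)) + (\<Sum>x\<in>A0. h (- a, Z x))) / N"
      unfolding K_def by (rule joint_expect[OF assms(3,4) fin1 fin0 ne1 ne0 c1 c0 N0])
    also have "(\<Sum>x\<in>A1. h (1 - a, Z x)) = (\<Sum>x\<in>A1. h (f x - a, Z x))" by (rule sum.cong) (auto simp: A1_def)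
    also have "(\<Sum>x\<in>A0. h (- a, Z x)) = (\<Sum>x\<in>A0. h (f x - a, Z x))" by (rule sum.cong) (auto simp: A0_def)
    also have "(\<Sum>x\<in>A1. h (f x - a, Z x)) + (\<Sum>x\<in>A0. h (f x - a, Z x)) = (\<Sum>x\<in>cube n. h (f x - a, Z x))"
      unfolding un by (rule sum.union_disjoint[OF fin1 fin0 dj, symmetric])
    finally show ?thesis .
  qed
  have aZ: "a + \<rho> * Z x = Tf x" for x using assms(1) by (simp add: Z_def)
  have f01: "0 \<le> f y \<and> f y \<le> 1" if "y \<in> cube n" for y using fv[OF that] by auto
  have supp: "\<forall>(s, z) \<in> set_pmf (joint_SZ a K). 0 \<le> a + \<rho> * z \<and> a + \<rho> * z \<le> 1"
  proof (clarify)
    fix s z assume "(s, z) \<in> set_pmf (joint_SZ a K)"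
    then have "z \<in> Z ` (A1 \<union> A0)" using joint_set[OF fin1 fin0 ne1 ne0, of a Z] unfolding K_def by auto
    then obtain x where x: "x \<in> cube n" "z = Z x" using un by auto
    show "0 \<le> a + \<rho> * z \<and> a + \<rho> * z \<le> 1"
      unfolding x aZ Tf_def using T_range[OF assms(2,1) x(1) f01] by auto
  qed
  have sumZ: "(\<Sum>x\<in>cube n. Z x) = 0"
    unfolding Z_def using sumT by (simp add: sum_divide_distrib[symmetric] sum_subtractf card_cube N_def)
  have q1: "(\<Sum>x\<in>cube n. (Tf x - a)^2) = (\<Sum>x\<in>cube n. (Tf x)^2) - N * a^2"
  proof -
    have "(\<Sum>x\<in>cube n. (Tf x - a)^2) = (\<Sum>x\<in>cube n. (Tf x)^2) - 2 * a * (\<Sum>x\<in>cube n. Tf x) + N * a^2"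
      by (simp add: power2_diff sum.distrib sum_subtractf sum_distrib_left card_cube N_def mult_ac)
    then show ?thesis using sumT by (simp add: power2_eq_square)
  qed
  have q2: "(\<Sum>x\<in>cube n. (f x - a) * (Tf x - a)) = (\<Sum>x\<in>cube n. f x * Tf x) - N * a^2"
  proof -
    have "(\<Sum>x\<in>cube n. (f x - a) * (Tf x - a)) = (\<Sum>x\<in>cube n. f x * Tf x) - a * (\<Sum>x\<in>cube n. Tf x) - a * (\<Sum>x\<in>cube n. f x) + N * a^2"
      by (simp add: algebra_simps sum.distrib sum_subtractf sum_distrib_left card_cube N_def power2_eq_square)
    then show ?thesis using sumT sumf by (simp add: power2_eq_square)
  qed
  have key: "(\<Sum>x\<in>cube n. (Tf x - a)^2) \<le> \<rho> * (\<Sum>x\<in>cube n. (f x - a) * (Tf x - a))"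
    unfolding q1 q2 using key_ineq[OF assms(1,2), of n f] unfolding coef0 Tf_def N_def .
  have z2: "(\<Sum>x\<in>cube n. (Z x)^2) = (\<Sum>x\<in>cube n. (Tf x - a)^2) / \<rho>^2"
    by (simp add: Z_def power_divide sum_divide_distrib)
  have sz: "(\<Sum>x\<in>cube n. (f x - a) * Z x) = (\<Sum>x\<in>cube n. (f x - a) * (Tf x - a)) / \<rho>"
    by (simp add: Z_def sum_divide_distrib)
  have ineq: "(\<Sum>x\<in>cube n. (Z x)^2) \<le> (\<Sum>x\<in>cube n. (f x - a) * Z x)"
    unfolding z2 sz using key assms(1) by (simp add: field_simps power2_eq_square)
  have feas: "Gamma_feasible \<rho> a K"
    unfolding Gamma_feasible_def using supp ineq N0 by (simp add: E sumZ divide_right_mono)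
  have "measure_pmf.expectation (joint_SZ a K) (\<lambda>(s, z). \<Phi> (a + \<rho> * z)) = Stab \<Phi> n \<rho> f"
    unfolding E by (simp add: aZ Stab_def cube_mean_def N_def Tf_def)
  with feas show ?thesis by blast
qed


lemma exists_f: assumes "0 < a" "a < 1" "2 ^ n * a \<in> \<int>"
  shows "\<exists>f. f \<in> bool_funs n \<and> cube_mean n f = a"
proof -
  obtain m where m: "2 ^ n * a = of_int m" using assms(3) Ints_cases by blast
  have m0: "m \<ge> 0" using m assms by (smt (verit) of_int_less_0_iff zero_less_power mult_pos_pos)
  define k where "k = nat m"
  have k: "real k = 2 ^ n * a" using m m0 by (simp add: k_def)
  have "real k \<le> 2 ^ n" using k assms by simp
  then have "k \<le> card (cube n)" by (simp add: card_cube)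
  then obtain B where B: "B \<subseteq> cube n" "card B = k" "finite B" by (rule obtain_subset_with_card_n)
  define f where "f = restrict (\<lambda>x. if x \<in> B then (1::real) else 0) (cube n)"
  have "f \<in> bool_funs n" by (auto simp: f_def bool_funs_def)
  moreover have "(\<Sum>x\<in>cube n. f x) = real (card B)"
  proof -
    have "(\<Sum>x\<in>cube n. f x) = (\<Sum>x\<in>cube n. if x \<in> B then 1 else 0)" by (rule sum.cong) (auto simp: f_def)
    also have "\<dots> = real (card (cube n \<inter> B))" using finite_cube by (simp add: sum.If_cases)
    finally show ?thesis using B by (simp add: Int_absorb1)
  qed
  then have "cube_mean n f = a" using B k by (simp add: cube_mean_def)
  ultimately show ?thesis by blast
qed

theorem theorem2p1:
  fixes \<Phi> :: "real \<Rightarrow> real" and n :: nat and \<rho> a :: real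
  assumes "n \<ge> 1"
    and "0 < \<rho>" "\<rho> < 1"
    and "0 < a" "a < 1"
    and "2 ^ n * a \<in> \<int>"
    and "continuous_on {0..1} \<Phi>"
    and "strictly_convex_on {0..1} \<Phi>"
  shows "MaxStab \<Phi> n \<rho> a \<le> Gamma_rho \<Phi> \<rho> a"
proof -
  have "compact (\<Phi> ` {0..1})" by (rule compact_continuous_image[OF assms(7)]) simp
  then obtain B where B: "\<And>x. x \<in> {0..1} \<Longrightarrow> \<bar>\<Phi> x\<bar> \<le> B"
    using compact_imp_bounded bounded_iff by (metis image_eqI real_norm_def)
  define G where "G = {measure_pmf.expectation (joint_SZ a K) (\<lambda>(s, z). \<Phi> (a + \<rho> * z)) | K. Gamma_feasible \<rho> a K}"
  have bdd: "bdd_above G"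
  proof (rule bdd_aboveI)
    fix g assume "g \<in> G"
    then obtain K where K: "Gamma_feasible \<rho> a K" and g: "g = measure_pmf.expectation (joint_SZ a K) (\<lambda>(s, z). \<Phi> (a + \<rho> * z))"
      unfolding G_def by blast
    have AE: "AE x in measure_pmf (joint_SZ a K). norm ((\<lambda>(s, z). \<Phi> (a + \<rho> * z)) x) \<le> B"
      using K B unfolding Gamma_feasible_def by (intro AE_pmfI) auto
    have int: "integrable (measure_pmf (joint_SZ a K)) (\<lambda>(s, z). \<Phi> (a + \<rho> * z))"
      by (rule measure_pmf.integrable_const_bound[OF AE]) simp
    have "g \<le> B" unfolding g
      by (rule measure_pmf.integral_le_const[OF int]) (use AE in \<open>auto elim: AE_mp\<close>)
    then show "g \<le> B" .
  qed
  let ?S = "{Stab \<Phi> n \<rho> f | f. f \<in> bool_funs n \<and> cube_mean n f = a}"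
  have fin: "finite ?S"
  proof -
    have "finite (bool_funs n)" unfolding bool_funs_def by (intro finite_PiE finite_cube) simp
    then have "finite ((\<lambda>f. Stab \<Phi> n \<rho> f) ` {f. f \<in> bool_funs n \<and> cube_mean n f = a})" by simp
    moreover have "?S = (\<lambda>f. Stab \<Phi> n \<rho> f) ` {f. f \<in> bool_funs n \<and> cube_mean n f = a}" by auto
    ultimately show ?thesis by simp
  qed
  have ne: "?S \<noteq> {}" using exists_f[OF assms(4,5,6)] by auto
  have "\<forall>v\<in>?S. v \<le> Sup G"
  proof
    fix v assume "v \<in> ?S"
    then obtain f where f: "f \<in> bool_funs n" "cube_mean n f = a" and v: "v = Stab \<Phi> n \<rho> f" by blast
    obtain K where K: "Gamma_feasible \<rho> a K" "measure_pmf.expectation (joint_SZ a K) (\<lambda>(s, z). \<Phi> (a + \<rho> * z)) = Stab \<Phi> n \<rho> f"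
      using stab_feasible[OF assms(2,3,4,5) f] by blast
    then have "v \<in> G" unfolding G_def v using K by (auto intro!: exI[of _ K])
    then show "v \<le> Sup G" by (rule cSup_upper[OF _ bdd])
  qed
  then show ?thesis unfolding MaxStab_def Gamma_rho_def G_def[symmetric]
    using fin ne by (simp add: Max_le_iff)
qed


end
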